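(* Let $T$ be a locally finite tree rooted at $o$, and for $r\in\mathbb N$ let $T(r)$ be the subtree induced by the vertices at distance at most $r$ from $o$. For every $x>0$ the limits $\lim_{r\to\infty}\mathcal R_x(T(2r),o)$ and $\lim_{r\to\infty}\mathcal R_x(T(2r+1),o)$ exist, and the maps $$x\mapsto \lim_{r\to\infty}\mathcal R_x(T(2r),o),\qquad x\mapsto \lim_{r\to\infty}\mathcal R_x(T(2r+1),o)$$ are real-analytic on $(0,\infty)$.
   Context: A tree is locally finite if each $T(r)$ is finite. For a finite simple graph $G=(V,E)$ and $x>0$, the monomer-dimer measure on matchings $D\subseteq E$ is $\mu_{G,x}(D)=x^{|V|-2|D|}/Z_G(x)$ with $Z_G(x)=\sum_D x^{|V|-2|D|}$ over all matchings; $\mathcal R_x(G,o)$ is the $\mu_{G,x}$-probability that $o$ is not covered by any edge of $D$. *)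

theory Defs
  imports "HOL-Analysis.Analysis"
begin

definition simple_graph :: "'a set \<Rightarrow> ('a \<Rightarrow> 'a \<Rightarrow> bool) \<Rightarrow> bool" where
  "simple_graph V E \<longleftrightarrow> (\<forall>u v. E u v \<longrightarrow> u \<in> V \<and> v \<in> V \<and> u \<noteq> v \<and> E v u)"

definition walk :: "'a set \<Rightarrow> ('a \<Rightarrow> 'a \<Rightarrow> bool) \<Rightarrow> 'a list \<Rightarrow> bool" where
  "walk V E xs \<longleftrightarrow> xs \<noteq> [] \<and> set xs \<subseteq> V \<and> (\<forall>i. Suc i < length xs \<longrightarrow> E (xs ! i) (xs ! Suc i))"

definition connected_graph :: "'a set \<Rightarrow> ('a \<Rightarrow> 'a \<Rightarrow> bool) \<Rightarrow> bool" where
  "connected_graph V E \<longleftrightarrow> (\<forall>u\<in>V. \<forall>v\<in>V. \<exists>xs. walk V E xs \<and> hd xs = u \<and> last xs = v)"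

definition has_cycle :: "'a set \<Rightarrow> ('a \<Rightarrow> 'a \<Rightarrow> bool) \<Rightarrow> bool" where
  "has_cycle V E \<longleftrightarrow> (\<exists>xs. walk V E xs \<and> distinct xs \<and> length xs \<ge> 3 \<and> E (last xs) (hd xs))"

definition tree :: "'a set \<Rightarrow> ('a \<Rightarrow> 'a \<Rightarrow> bool) \<Rightarrow> bool" where
  "tree V E \<longleftrightarrow> simple_graph V E \<and> V \<noteq> {} \<and> connected_graph V E \<and> \<not> has_cycle V E"

text \<open>Vertices at graph distance at most r from rt (vertex set of T(r)).\<close>
definition ball_graph :: "'a set \<Rightarrow> ('a \<Rightarrow> 'a \<Rightarrow> bool) \<Rightarrow> 'a \<Rightarrow> nat \<Rightarrow> 'a set" where
  "ball_graph V E rt r = {v. \<exists>xs. walk V E xs \<and> hd xs = rt \<and> last xs = v \<and> length xs \<le> r + 1}"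

definition induced :: "('a \<Rightarrow> 'a \<Rightarrow> bool) \<Rightarrow> 'a set \<Rightarrow> 'a \<Rightarrow> 'a \<Rightarrow> bool" where
  "induced E W u v \<longleftrightarrow> u \<in> W \<and> v \<in> W \<and> E u v"

definition locally_finite_tree :: "'a set \<Rightarrow> ('a \<Rightarrow> 'a \<Rightarrow> bool) \<Rightarrow> 'a \<Rightarrow> bool" where
  "locally_finite_tree V E rt \<longleftrightarrow> (\<forall>r. finite (ball_graph V E rt r))"

definition graph_edges :: "'a set \<Rightarrow> ('a \<Rightarrow> 'a \<Rightarrow> bool) \<Rightarrow> 'a set set" where
  "graph_edges V E = {{u, v} | u v. u \<in> V \<and> v \<in> V \<and> E u v}"

definition matchings :: "'a set \<Rightarrow> ('a \<Rightarrow> 'a \<Rightarrow> bool) \<Rightarrow> 'a set set set" where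
  "matchings V E = {D. D \<subseteq> graph_edges V E \<and> (\<forall>e\<in>D. \<forall>e'\<in>D. e \<noteq> e' \<longrightarrow> e \<inter> e' = {})}"

definition md_Z :: "'a set \<Rightarrow> ('a \<Rightarrow> 'a \<Rightarrow> bool) \<Rightarrow> real \<Rightarrow> real" where
  "md_Z V E x = (\<Sum>D\<in>matchings V E. x ^ (card V - 2 * card D))"

definition md_measure :: "'a set \<Rightarrow> ('a \<Rightarrow> 'a \<Rightarrow> bool) \<Rightarrow> real \<Rightarrow> 'a set set \<Rightarrow> real" where
  "md_measure V E x D = x ^ (card V - 2 * card D) / md_Z V E x"

text \<open>R_x(G,rt): probability that rt is not covered by any edge of D.\<close>
definition md_R :: "'a set \<Rightarrow> ('a \<Rightarrow> 'a \<Rightarrow> bool) \<Rightarrow> real \<Rightarrow> 'a \<Rightarrow> real" where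
  "md_R V E x rt = (\<Sum>D\<in>{D\<in>matchings V E. \<forall>e\<in>D. rt \<notin> e}. md_measure V E x D)"

definition real_analytic_on :: "(real \<Rightarrow> real) \<Rightarrow> real set \<Rightarrow> bool" where
  "real_analytic_on f S \<longleftrightarrow> (\<forall>x0\<in>S. \<exists>\<epsilon>>0. \<exists>c::nat \<Rightarrow> real.
      \<forall>x. \<bar>x - x0\<bar> < \<epsilon> \<longrightarrow> (\<lambda>n. c n * (x - x0) ^ n) sums f x)"

end

theory Submission
  imports Defs "HOL-Complex_Analysis.Complex_Analysis"
begin

definition PZ :: "('a \<Rightarrow> 'a \<Rightarrow> bool) \<Rightarrow> 'a set \<Rightarrow> 'b::comm_ring_1 \<Rightarrow> 'b" where
  "PZ E W z = (\<Sum>D\<in>matchings W (induced E W). z ^ (card W - 2 * card D))"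

abbreviation "M E W \<equiv> matchings W (induced E W)"

lemma edges_induced_iff:
  "e \<in> graph_edges W (induced E W) \<longleftrightarrow> (\<exists>u v. e = {u,v} \<and> u \<in> W \<and> v \<in> W \<and> E u v)"
  unfolding graph_edges_def induced_def by auto

lemma M_iff: "D \<in> M E W \<longleftrightarrow> (\<forall>e\<in>D. \<exists>u v. e = {u,v} \<and> u \<in> W \<and> v \<in> W \<and> E u v)
   \<and> (\<forall>e\<in>D. \<forall>e'\<in>D. e \<noteq> e' \<longrightarrow> e \<inter> e' = {})"
  by (simp only: matchings_def mem_Collect_eq subset_iff edges_induced_iff Ball_def)

lemma MD1: assumes "D \<in> M E W" "e \<in> D" shows "\<exists>u v. e = {u,v} \<and> u \<in> W \<and> v \<in> W \<and> E u v"
  using bspec[OF conjunct1[OF assms(1)[unfolded M_iff]] assms(2)] .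

lemma MD2: assumes "D \<in> M E W" "e \<in> D" "e' \<in> D" "e \<noteq> e'" shows "e \<inter> e' = {}"
  using mp[OF bspec[OF bspec[OF conjunct2[OF assms(1)[unfolded M_iff]] assms(2)] assms(3)] assms(4)] .

lemma MI: assumes "\<And>e. e \<in> D \<Longrightarrow> \<exists>u v. e = {u,v} \<and> u \<in> W \<and> v \<in> W \<and> E u v"
  "\<And>e e'. e \<in> D \<Longrightarrow> e' \<in> D \<Longrightarrow> e \<noteq> e' \<Longrightarrow> e \<inter> e' = {}" shows "D \<in> M E W"
  unfolding M_iff by (intro conjI ballI impI; rule assms; assumption)

lemma M_sub: "D \<in> M E W \<Longrightarrow> D \<subseteq> Pow W"
proof
  fix e assume "D \<in> M E W" "e \<in> D"
  then obtain u v where "e = {u,v}" "u \<in> W" "v \<in> W" using MD1 by blast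
  then show "e \<in> Pow W" by auto
qed

lemma finite_M: "finite W \<Longrightarrow> finite (M E W)"
  by (rule finite_subset[of _ "Pow (Pow W)"]) (auto dest: M_sub)

lemma finite_D: "finite W \<Longrightarrow> D \<in> M E W \<Longrightarrow> finite D"
  by (meson M_sub finite_Pow_iff finite_subset)

lemma card_M:
  assumes irr: "\<And>u. \<not> E u u" and W: "finite W" and D: "D \<in> M E W"
  shows "2 * card D \<le> card W"
proof -
  have fD: "finite D" using finite_D[OF W D] .
  have c2: "card e = 2" if e: "e \<in> D" for e
  proof -
    obtain u v where "e = {u,v}" "E u v" using MD1[OF D e] by blast
    then show ?thesis using irr by (metis card_2_iff)
  qed
  have fe: "\<And>e. e \<in> D \<Longrightarrow> finite e" using c2 by (metis card.infinite zero_neq_numeral)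
  have "card (\<Union>D) = (\<Sum>e\<in>D. card e)"
  proof (rule card_Union_disjoint)
    show "pairwise disjnt D" unfolding pairwise_def disjnt_def using MD2[OF D] by blast
  qed (use fD fe in auto)
  also have "\<dots> = 2 * card D" using c2 by simp
  finally have eq: "card (\<Union>D) = 2 * card D" .
  have U: "\<Union>D \<subseteq> W" using M_sub[OF D] by blast
  have "card (\<Union>D) \<le> card W" using card_mono[OF W U] .
  then show ?thesis using eq by simp
qed

lemma M_avoid: "M E (W - {w}) = {D \<in> M E W. \<forall>e\<in>D. w \<notin> e}"
proof (rule set_eqI, rule iffI)
  fix D assume D: "D \<in> M E (W - {w})"
  have a: "w \<notin> e" if e: "e \<in> D" for e
  proof -
    obtain u v where "e = {u,v}" "u \<in> W - {w}" "v \<in> W - {w}" using MD1[OF D e] by blast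
    then show ?thesis by auto
  qed
  have "D \<in> M E W"
  proof (rule MI)
    fix e assume e: "e \<in> D"
    obtain u v where uv: "e = {u,v}" "u \<in> W - {w}" "v \<in> W - {w}" "E u v" using MD1[OF D e] by blast
    then show "\<exists>u v. e = {u,v} \<and> u \<in> W \<and> v \<in> W \<and> E u v" by blast
  next
    fix e e' assume "e \<in> D" "e' \<in> D" "e \<noteq> e'"
    then show "e \<inter> e' = {}" using MD2[OF D] by blast
  qed
  then show "D \<in> {D \<in> M E W. \<forall>e\<in>D. w \<notin> e}" using a by blast
next
  fix D assume "D \<in> {D \<in> M E W. \<forall>e\<in>D. w \<notin> e}"
  then have D: "D \<in> M E W" and a: "\<And>e. e \<in> D \<Longrightarrow> w \<notin> e" by auto
  show "D \<in> M E (W - {w})"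
  proof (rule MI)
    fix e assume e: "e \<in> D"
    obtain u v where uv: "e = {u,v}" "u \<in> W" "v \<in> W" "E u v" using MD1[OF D e] by blast
    have "w \<notin> e" using a e .
    then show "\<exists>u v. e = {u,v} \<and> u \<in> W - {w} \<and> v \<in> W - {w} \<and> E u v"
      using uv by (intro exI[of _ u] exI[of _ v]) auto
  next
    fix e e' assume "e \<in> D" "e' \<in> D" "e \<noteq> e'"
    then show "e \<inter> e' = {}" using MD2[OF D] by blast
  qed
qed

lemma M_cover:
  assumes sym: "\<And>u v. E u v \<Longrightarrow> E v u" and w: "w \<in> W"
  shows "{D \<in> M E W. \<exists>e\<in>D. w \<in> e} =
    (\<lambda>(v,D). insert {w,v} D) ` (SIGMA v:{v\<in>W. E w v}. M E (W - {w,v}))"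
proof (rule set_eqI, rule iffI)
  fix D assume "D \<in> {D \<in> M E W. \<exists>e\<in>D. w \<in> e}"
  then have D: "D \<in> M E W" and "\<exists>e\<in>D. w \<in> e" by auto
  then obtain e where e: "e \<in> D" "w \<in> e" by blast
  obtain a b where ab: "e = {a,b}" "a \<in> W" "b \<in> W" "E a b" using MD1[OF D e(1)] by blast
  obtain v where v: "e = {w,v}" "v \<in> W" "E w v"
  proof (cases "a = w")
    case True then show ?thesis using that ab by auto
  next
    case False then have "b = w" using ab e by auto
    then show ?thesis using that[of a] ab sym by auto
  qed
  have disj: "e' \<inter> {w,v} = {}" if e': "e' \<in> D - {e}" for e'
  proof -
    have "e' \<inter> e = {}" using MD2[OF D, of e' e] e' e by blast
    then show ?thesis using v by simp
  qed
  have "D - {e} \<in> M E (W - {w,v})"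
  proof (rule MI)
    fix e' assume e': "e' \<in> D - {e}"
    then obtain a b where ab': "e' = {a,b}" "a \<in> W" "b \<in> W" "E a b" using MD1[OF D] by blast
    have "e' \<inter> {w,v} = {}" using disj e' .
    then show "\<exists>a b. e' = {a, b} \<and> a \<in> W - {w, v} \<and> b \<in> W - {w, v} \<and> E a b"
      using ab' by (intro exI[of _ a] exI[of _ b]) auto
  next
    fix e1 e2 assume "e1 \<in> D - {e}" "e2 \<in> D - {e}" "e1 \<noteq> e2"
    then show "e1 \<inter> e2 = {}" using MD2[OF D] by blast
  qed
  moreover have "D = insert {w,v} (D - {e})" using e v by auto
  ultimately show "D \<in> (\<lambda>(v,D). insert {w,v} D) ` (SIGMA v:{v\<in>W. E w v}. M E (W - {w,v}))"
    using v by (intro image_eqI[of _ _ "(v, D - {e})"]) auto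
next
  fix D assume "D \<in> (\<lambda>(v,D). insert {w,v} D) ` (SIGMA v:{v\<in>W. E w v}. M E (W - {w,v}))"
  then obtain v D' where D: "D = insert {w,v} D'" "v \<in> W" "E w v" "D' \<in> M E (W - {w,v})" by auto
  have sub: "e \<inter> {w,v} = {}" if e': "e \<in> D'" for e
  proof -
    obtain a b where "e = {a,b}" "a \<in> W - {w,v}" "b \<in> W - {w,v}" using MD1[OF D(4) e'] by blast
    then show ?thesis by auto
  qed
  have "D \<in> M E W"
  proof (rule MI)
    fix e assume e: "e \<in> D"
    show "\<exists>a b. e = {a, b} \<and> a \<in> W \<and> b \<in> W \<and> E a b"
    proof (cases "e = {w,v}")
      case True then show ?thesis using D w by blast
    next
      case False then have "e \<in> D'" using e D(1) by auto
      then obtain a b where "e = {a,b}" "a \<in> W - {w,v}" "b \<in> W - {w,v}" "E a b" using MD1[OF D(4)] by blast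
      then show ?thesis by blast
    qed
  next
    fix e1 e2 assume e12: "e1 \<in> D" "e2 \<in> D" "e1 \<noteq> e2"
    show "e1 \<inter> e2 = {}"
    proof (cases "e1 = {w,v}")
      case True then have "e2 \<in> D'" using e12 D(1) by auto
      then show ?thesis using sub True by blast
    next
      case False then have e1: "e1 \<in> D'" using e12 D(1) by auto
      show ?thesis
      proof (cases "e2 = {w,v}")
        case True then show ?thesis using sub e1 by blast
      next
        case False then have "e2 \<in> D'" using e12 D(1) by auto
        then show ?thesis using MD2[OF D(4)] e1 e12 by blast
      qed
    qed
  qed
  then show "D \<in> {D \<in> M E W. \<exists>e\<in>D. w \<in> e}" using D(1) by auto
qed

lemma M_cover_inj:
  assumes w: "w \<in> W"
  shows "inj_on (\<lambda>(v,D). insert {w,v} D) (SIGMA v:{v\<in>W. E w v}. M E (W - {w,v}))"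
proof (rule inj_onI, clarsimp)
  fix v D v' D'
  assume D: "D \<in> M E (W - {w,v})" and D': "D' \<in> M E (W - {w,v'})"
    and eq: "insert {w, v} D = insert {w, v'} D'"
  have n1: "{w,x} \<notin> D" for x using M_sub[OF D] by auto
  have n2: "{w,x} \<notin> D'" for x using M_sub[OF D'] by auto
  have "{w,v} \<in> insert {w, v'} D'" using eq by auto
  then have "{w,v} = {w,v'}" using n2 by auto
  then have vv: "v = v'" by (metis doubleton_eq_iff)
  then show "v = v' \<and> D = D'" using eq n1 n2
    by (metis insert_absorb insert_ident)
qed

lemma PZ_rec:
  assumes sym: "\<And>u v. E u v \<Longrightarrow> E v u" and irr: "\<And>u. \<not> E u u"
    and W: "finite W" and w: "w \<in> W"
  shows "PZ E W z = z * PZ E (W - {w}) z + (\<Sum>v\<in>{v\<in>W. E w v}. PZ E (W - {w,v}) z)"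
proof -
  let ?A = "{D \<in> M E W. \<forall>e\<in>D. w \<notin> e}"
  let ?B = "{D \<in> M E W. \<exists>e\<in>D. w \<in> e}"
  have split: "M E W = ?A \<union> ?B" "?A \<inter> ?B = {}" by blast+
  have fin: "finite (M E W)" using finite_M[OF W] .
  have cW: "card W = Suc (card (W - {w}))" using card_Suc_Diff1[OF W w] by simp
  have "PZ E W z = (\<Sum>D\<in>?A. z ^ (card W - 2 * card D)) + (\<Sum>D\<in>?B. z ^ (card W - 2 * card D))"
  proof -
    have "PZ E W z = (\<Sum>D\<in>?A \<union> ?B. z ^ (card W - 2 * card D))"
      unfolding PZ_def by (rule sum.cong[OF split(1) refl])
    also have "\<dots> = (\<Sum>D\<in>?A. z ^ (card W - 2 * card D)) + (\<Sum>D\<in>?B. z ^ (card W - 2 * card D))"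
      by (rule sum.union_disjoint[OF finite_subset[OF Collect_subset fin] finite_subset[OF Collect_subset fin] split(2)])
    finally show ?thesis .
  qed
  moreover have "(\<Sum>D\<in>?A. z ^ (card W - 2 * card D)) = z * PZ E (W - {w}) z"
  proof -
    have "(\<Sum>D\<in>?A. z ^ (card W - 2 * card D)) = (\<Sum>D\<in>M E (W-{w}). z * z ^ (card (W-{w}) - 2 * card D))"
    proof (rule sum.cong)
      show "?A = M E (W - {w})" by (rule M_avoid[symmetric])
      fix D assume D: "D \<in> M E (W - {w})"
      have "finite (W - {w})" using W by simp
      then have "2 * card D \<le> card (W - {w})" using card_M[OF irr _ D] by simp
      then show "z ^ (card W - 2 * card D) = z * z ^ (card (W - {w}) - 2 * card D)"
        using cW by (simp add: Suc_diff_le)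
    qed
    then show ?thesis unfolding PZ_def by (simp add: sum_distrib_left)
  qed
  moreover have "(\<Sum>D\<in>?B. z ^ (card W - 2 * card D)) = (\<Sum>v\<in>{v\<in>W. E w v}. PZ E (W - {w,v}) z)"
  proof -
    have "(\<Sum>D\<in>?B. z ^ (card W - 2 * card D)) =
       (\<Sum>p\<in>(SIGMA v:{v\<in>W. E w v}. M E (W - {w,v})). z ^ (card W - 2 * card (insert {w, fst p} (snd p))))"
      by (rule sum.reindex_cong[OF M_cover_inj[OF w] M_cover[OF sym w]]) (auto split: prod.splits)
    also have "\<dots> = (\<Sum>v\<in>{v\<in>W. E w v}. \<Sum>D\<in>M E (W - {w,v}). z ^ (card W - 2 * card (insert {w, v} D)))"
    proof -
      have fS: "\<forall>v\<in>{v\<in>W. E w v}. finite (M E (W-{w,v}))" using W by (simp add: finite_M)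
      have fA: "finite {v\<in>W. E w v}" using W by simp
      show ?thesis
        using sum.Sigma[OF fA fS, of "\<lambda>v D. z ^ (card W - 2 * card (insert {w,v} D))"]
        by (simp add: case_prod_beta)
    qed
    also have "\<dots> = (\<Sum>v\<in>{v\<in>W. E w v}. PZ E (W - {w,v}) z)"
      unfolding PZ_def
    proof (intro sum.cong refl)
      fix v D assume v: "v \<in> {v\<in>W. E w v}" and D: "D \<in> M E (W - {w,v})"
      have "{w,v} \<notin> D" using M_sub[OF D] by auto
      moreover have "finite D" using finite_D[OF _ D] W by blast
      ultimately have "card (insert {w,v} D) = Suc (card D)" by simp
      moreover have "card W = card (W - {w,v}) + 2"
      proof -
        have vw: "v \<noteq> w" using v irr by auto
        have sub: "{w,v} \<subseteq> W" using v w by auto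
        have c2: "card {w,v} = 2" using vw by simp
        have "card {w,v} \<le> card W" using card_mono[OF W sub] .
        moreover have "card (W - {w,v}) = card W - card {w,v}"
          using card_Diff_subset[OF _ sub] by simp
        ultimately show ?thesis using c2 by simp
      qed
      ultimately show "z ^ (card W - 2 * card (insert {w, v} D)) = z ^ (card (W - {w, v}) - 2 * card D)"
        by simp
    qed
    finally show ?thesis .
  qed
  ultimately show ?thesis by simp
qed


lemma M_empty: "M E {} = {{}}"
proof -
  have "D \<in> M E {} \<longleftrightarrow> D = {}" for D
  proof
    assume D: "D \<in> M E {}"
    show "D = {}"
    proof (rule ccontr)
      assume "D \<noteq> {}" then obtain e where e: "e \<in> D" by blast
      show False using MD1[OF D e] by blast
    qed
  next
    assume "D = {}" then show "D \<in> M E {}" by (auto intro: MI)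
  qed
  then show ?thesis by auto
qed

lemma PZ_empty: "PZ E {} z = 1"
  unfolding PZ_def M_empty by simp

lemma Diff2: "W - {w, v} = (W - {w}) - {v}" by auto

lemma Re_inv_pos: "Re (q::complex) > 0 \<Longrightarrow> Re (1 / q) > 0"
  by (simp add: Re_divide sum_power2_gt_zero_iff)

lemma HL:
  assumes sym: "\<And>u v. E u v \<Longrightarrow> E v u" and irr: "\<And>u. \<not> E u u"
    and W: "finite W" and z: "Re z > 0"
  shows "PZ E W (z::complex) \<noteq> 0 \<and> (\<forall>w\<in>W. PZ E (W - {w}) z \<noteq> 0 \<and> Re (PZ E W z / PZ E (W - {w}) z) \<ge> Re z)"
  using W
proof (induction "card W" arbitrary: W rule: less_induct)
  case less
  have step: "PZ E (W - {w}) z \<noteq> 0 \<and> Re (PZ E W z / PZ E (W - {w}) z) \<ge> Re z" if w: "w \<in> W" for w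
  proof -
    let ?W' = "W - {w}"
    have fW': "finite ?W'" using less.prems by simp
    have cW': "card ?W' < card W" using card_Diff1_less[OF less.prems w] .
    have IH: "PZ E ?W' z \<noteq> 0 \<and> (\<forall>v\<in>?W'. PZ E (?W' - {v}) z \<noteq> 0 \<and> Re (PZ E ?W' z / PZ E (?W' - {v}) z) \<ge> Re z)"
      using less.hyps[OF cW' fW'] .
    have nz: "PZ E ?W' z \<noteq> 0" using IH by blast
    have rv: "Re (PZ E (W - {w,v}) z / PZ E ?W' z) > 0" if v: "v \<in> {v\<in>W. E w v}" for v
    proof -
      have vW': "v \<in> ?W'" using v irr by auto
      have "Re z \<le> Re (PZ E ?W' z / PZ E (?W' - {v}) z)" using IH vW' by blast
      then have "Re (PZ E ?W' z / PZ E (?W' - {v}) z) > 0" using z by linarith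
      then have "Re (1 / (PZ E ?W' z / PZ E (?W' - {v}) z)) > 0" by (rule Re_inv_pos)
      then show ?thesis by (simp add: Diff2)
    qed
    have "PZ E W z / PZ E ?W' z = z + (\<Sum>v\<in>{v\<in>W. E w v}. PZ E (W - {w,v}) z / PZ E ?W' z)"
    proof -
      have rec: "PZ E W z = z * PZ E ?W' z + (\<Sum>v\<in>{v\<in>W. E w v}. PZ E (W - {w,v}) z)"
        by (rule PZ_rec[OF sym irr less.prems w])
      have "PZ E W z / PZ E ?W' z = z + (\<Sum>v\<in>{v\<in>W. E w v}. PZ E (W - {w,v}) z) / PZ E ?W' z"
        using nz by (simp add: rec add_divide_distrib)
      then show ?thesis by (simp add: sum_divide_distrib)
    qed
    then have "Re (PZ E W z / PZ E ?W' z) = Re z + (\<Sum>v\<in>{v\<in>W. E w v}. Re (PZ E (W - {w,v}) z / PZ E ?W' z))"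
      by (simp add: Re_sum)
    moreover have "(\<Sum>v\<in>{v\<in>W. E w v}. Re (PZ E (W - {w,v}) z / PZ E ?W' z)) \<ge> 0"
      using rv by (intro sum_nonneg) (simp add: less_imp_le)
    ultimately show ?thesis using nz by simp
  qed
  show ?case
  proof (cases "W = {}")
    case True then show ?thesis by (simp add: PZ_empty)
  next
    case False
    then obtain w where w: "w \<in> W" by blast
    have "Re (PZ E W z / PZ E (W - {w}) z) > 0" using step[OF w] z by linarith
    then have "PZ E W z \<noteq> 0" by auto
    then show ?thesis using step by blast
  qed
qed


lemma empty_in_M: "{} \<in> M E W"
  by (rule MI) auto

lemma PZ_pos: "finite W \<Longrightarrow> x > 0 \<Longrightarrow> PZ E W (x::real) > 0"
  unfolding PZ_def by (rule sum_pos) (use finite_M[where E=E and W=W] empty_in_M[where E=E and W=W] in auto)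

definition SR :: "('a \<Rightarrow> 'a \<Rightarrow> bool) \<Rightarrow> 'a set \<Rightarrow> 'a \<Rightarrow> real \<Rightarrow> real" where
  "SR E W w x = PZ E (W - {w}) x / PZ E W x"

lemma SR_pos: "finite W \<Longrightarrow> x > 0 \<Longrightarrow> SR E W w x > 0"
  unfolding SR_def using PZ_pos[of W x E] PZ_pos[of "W - {w}" x E] by simp

lemma SR_rec:
  assumes sym: "\<And>u v. E u v \<Longrightarrow> E v u" and irr: "\<And>u. \<not> E u u"
    and W: "finite W" and w: "w \<in> W" and x: "x > 0"
  shows "1 / SR E W w x = x + (\<Sum>v\<in>{v\<in>W. E w v}. SR E (W - {w}) v x)"
proof -
  have rec: "PZ E W x = x * PZ E (W - {w}) x + (\<Sum>v\<in>{v\<in>W. E w v}. PZ E (W - {w,v}) x)"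
    by (rule PZ_rec[OF sym irr W w])
  have nz: "PZ E (W - {w}) x \<noteq> 0" using PZ_pos[of "W - {w}" x E] W x by simp
  have "1 / SR E W w x = PZ E W x / PZ E (W - {w}) x" unfolding SR_def by simp
  also have "\<dots> = x + (\<Sum>v\<in>{v\<in>W. E w v}. PZ E (W - {w,v}) x) / PZ E (W - {w}) x"
    using nz by (simp add: rec add_divide_distrib)
  also have "\<dots> = x + (\<Sum>v\<in>{v\<in>W. E w v}. SR E (W - {w}) v x)"
    by (simp add: sum_divide_distrib SR_def Diff2)
  finally show ?thesis .
qed

definition exitp :: "('a \<Rightarrow> 'a \<Rightarrow> bool) \<Rightarrow> 'a set \<Rightarrow> 'a set \<Rightarrow> 'a \<Rightarrow> bool \<Rightarrow> bool" where
  "exitp E A B w p \<longleftrightarrow> (\<forall>xs. xs \<noteq> [] \<and> set xs \<subseteq> B \<and> (\<forall>i. Suc i < length xs \<longrightarrow> E (xs ! i) (xs ! Suc i))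
      \<and> hd xs = w \<and> last xs \<notin> A \<and> set (butlast xs) \<subseteq> A \<longrightarrow> even (length xs) = p)"

lemma exitp_step:
  assumes ex: "exitp E A B w p" and AB: "A \<subseteq> B" and w: "w \<in> A" and v: "E w v"
  shows "exitp E (A - {w}) (B - {w}) v (\<not> p)"
  unfolding exitp_def
proof (intro allI impI)
  fix xs assume H: "xs \<noteq> [] \<and> set xs \<subseteq> B - {w} \<and> (\<forall>i. Suc i < length xs \<longrightarrow> E (xs ! i) (xs ! Suc i))
      \<and> hd xs = v \<and> last xs \<notin> A - {w} \<and> set (butlast xs) \<subseteq> A - {w}"
  let ?ys = "w # xs"
  have w1: "\<forall>i. Suc i < length ?ys \<longrightarrow> E (?ys ! i) (?ys ! Suc i)"
  proof (intro allI impI)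
    fix i assume i: "Suc i < length ?ys"
    show "E (?ys ! i) (?ys ! Suc i)"
    proof (cases i)
      case 0
      have ne: "xs \<noteq> []" using H by blast
      have "xs ! 0 = hd xs" using hd_conv_nth[OF ne] by simp
      then show ?thesis using H v 0 by simp
    next
      case (Suc j) then show ?thesis using H i by simp
    qed
  qed
  have lx: "last xs \<in> set xs" using H by simp
  have "last xs \<noteq> w" using lx H by blast
  then have "last xs \<notin> A" using H by blast
  then have l1: "last ?ys \<notin> A" using H by simp
  have l2: "set (butlast ?ys) \<subseteq> A" using H w by auto
  have l3: "set ?ys \<subseteq> B" using H w AB by auto
  have "even (length ?ys) = p"
    by (rule mp[OF spec[OF ex[unfolded exitp_def], of ?ys]]) (intro conjI; (rule w1 l1 l2 l3)?; simp)
  then show "even (length xs) = (\<not> p)" by auto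
qed

lemma SR_mono:
  assumes sym: "\<And>u v. E u v \<Longrightarrow> E v u" and irr: "\<And>u. \<not> E u u" and x: "x > 0"
  shows "finite B \<Longrightarrow> A \<subseteq> B \<Longrightarrow> w \<in> A \<Longrightarrow> exitp E A B w p \<Longrightarrow>
     (if p then SR E B w x \<le> SR E A w x else SR E A w x \<le> SR E B w x)"
proof (induction "card B" arbitrary: A B w p rule: less_induct)
  case less
  have B: "finite B" and AB: "A \<subseteq> B" and w: "w \<in> A" and ex: "exitp E A B w p" using less.prems by auto
  have A: "finite A" using B AB finite_subset by blast
  have wB: "w \<in> B" using AB w by blast
  let ?NA = "{v\<in>A. E w v}" and ?NB = "{v\<in>B. E w v}"
  have cB: "card (B - {w}) < card B" using card_Diff1_less[OF B wB] .
  have IH: "(if \<not> p then SR E (B - {w}) v x \<le> SR E (A - {w}) v x else SR E (A - {w}) v x \<le> SR E (B - {w}) v x)"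
    if v: "v \<in> ?NA" for v
  proof -
    have vA: "v \<in> A - {w}" using v irr by auto
    show ?thesis
      by (rule less.hyps[OF cB]) (use B AB vA exitp_step[OF ex AB w] v in auto)
  qed
  have recA: "1 / SR E A w x = x + (\<Sum>v\<in>?NA. SR E (A - {w}) v x)" by (rule SR_rec[OF sym irr A w x])
  have recB: "1 / SR E B w x = x + (\<Sum>v\<in>?NB. SR E (B - {w}) v x)" by (rule SR_rec[OF sym irr B wB x])
  have fNB: "finite ?NB" using B by simp
  have split: "(\<Sum>v\<in>?NB. SR E (B - {w}) v x) = (\<Sum>v\<in>?NA. SR E (B - {w}) v x) + (\<Sum>v\<in>?NB - ?NA. SR E (B - {w}) v x)"
  proof -
    have sub: "?NA \<subseteq> ?NB" using AB by blast
    show ?thesis using sum.subset_diff[OF sub fNB, of "\<lambda>v. SR E (B - {w}) v x"] by linarith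
  qed
  have posA: "SR E A w x > 0" using SR_pos[OF A x] .
  have posB: "SR E B w x > 0" using SR_pos[OF B x] .
  show ?case
  proof (cases p)
    case True
    have "(\<Sum>v\<in>?NA. SR E (A - {w}) v x) \<le> (\<Sum>v\<in>?NA. SR E (B - {w}) v x)"
      by (rule sum_mono) (use IH True in auto)
    moreover have "(\<Sum>v\<in>?NB - ?NA. SR E (B - {w}) v x) \<ge> 0"
      by (rule sum_nonneg) (use SR_pos[of "B - {w}" x E] B x in \<open>auto intro: less_imp_le\<close>)
    ultimately have "1 / SR E A w x \<le> 1 / SR E B w x" using recA recB split by linarith
    then have "SR E B w x \<le> SR E A w x" using posA posB by (metis inverse_eq_divide inverse_le_iff_le)
    then show ?thesis using True by simp
  next
    case False
    have empty: "?NB - ?NA = {}"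
    proof (rule ccontr)
      assume "?NB - ?NA \<noteq> {}"
      then obtain v where v: "v \<in> B" "E w v" "v \<notin> A" by blast
      have "even (length [w, v]) = p"
        using ex unfolding exitp_def
        by (rule allE[of _ "[w,v]"]) (use v wB w in \<open>auto simp: less_Suc_eq\<close>)
      then show False using False by simp
    qed
    have "(\<Sum>v\<in>?NA. SR E (B - {w}) v x) \<le> (\<Sum>v\<in>?NA. SR E (A - {w}) v x)"
      by (rule sum_mono) (use IH False in auto)
    then have "1 / SR E B w x \<le> 1 / SR E A w x" using recA recB split empty by simp
    then have "SR E A w x \<le> SR E B w x" using posA posB by (metis inverse_eq_divide inverse_le_iff_le)
    then show ?thesis using False by simp
  qed
qed

lemma walk_nth: "walk V E xs \<Longrightarrow> Suc i < length xs \<Longrightarrow> E (xs ! i) (xs ! Suc i)"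
  unfolding walk_def by blast

lemma walk_setD: "walk V E xs \<Longrightarrow> set xs \<subseteq> V"
  unfolding walk_def by blast

lemma walk_ne: "walk V E xs \<Longrightarrow> xs \<noteq> []"
  unfolding walk_def by blast

lemma walk_take: assumes "walk V E xs" "0 < n" shows "walk V E (take n xs)"
  unfolding walk_def
proof (intro conjI allI impI)
  show "take n xs \<noteq> []" using assms walk_ne by force
  show "set (take n xs) \<subseteq> V" using assms walk_setD set_take_subset by fast
  fix i assume "Suc i < length (take n xs)"
  then show "E (take n xs ! i) (take n xs ! Suc i)" using walk_nth[OF assms(1)] by simp
qed

lemma walk_drop: assumes "walk V E xs" "n < length xs" shows "walk V E (drop n xs)"
  unfolding walk_def
proof (intro conjI allI impI)
  show "drop n xs \<noteq> []" using assms by simp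
  show "set (drop n xs) \<subseteq> V" using assms walk_setD set_drop_subset by fast
  fix i assume "Suc i < length (drop n xs)"
  then show "E (drop n xs ! i) (drop n xs ! Suc i)" using walk_nth[OF assms(1), of "n + i"] by simp
qed

lemma walk_append:
  assumes xs: "walk V E xs" and ys: "walk V E ys" and e: "E (last xs) (hd ys)"
  shows "walk V E (xs @ ys)"
  unfolding walk_def
proof (intro conjI allI impI)
  show "xs @ ys \<noteq> []" using xs walk_ne by blast
  show "set (xs @ ys) \<subseteq> V" using xs ys walk_setD by force
  fix i assume i: "Suc i < length (xs @ ys)"
  have xne: "xs \<noteq> []" and yne: "ys \<noteq> []" using xs ys walk_ne by blast+
  consider "Suc i < length xs" | "Suc i = length xs" | "Suc i > length xs" by linarith
  then show "E ((xs @ ys) ! i) ((xs @ ys) ! Suc i)"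
  proof cases
    case 1 then show ?thesis using walk_nth[OF xs] by (simp add: nth_append)
  next
    case 2
    have "xs ! i = last xs" using 2 xne by (metis diff_Suc_1 last_conv_nth)
    moreover have "ys ! 0 = hd ys" using yne by (simp add: hd_conv_nth)
    ultimately show ?thesis using 2 e by (simp add: nth_append)
  next
    case 3
    then obtain j where j: "i = length xs + j" by (metis less_imp_Suc_add add_Suc_right less_SucE Suc_lessD
          add.commute le_add_diff_inverse less_or_eq_imp_le)
    have "Suc j < length ys" using i j by simp
    then show ?thesis using walk_nth[OF ys, of j] j by (simp add: nth_append)
  qed
qed

lemma walk_rev:
  assumes sym: "\<And>u v. E u v \<Longrightarrow> E v u" and xs: "walk V E xs"
  shows "walk V E (rev xs)"
  unfolding walk_def
proof (intro conjI allI impI)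
  show "rev xs \<noteq> []" using xs walk_ne[OF xs(1)] by simp
  show "set (rev xs) \<subseteq> V" using xs walk_setD by simp
  fix i assume i: "Suc i < length (rev xs)"
  let ?n = "length xs"
  have "E (xs ! (?n - Suc (Suc i))) (xs ! Suc (?n - Suc (Suc i)))"
    using walk_nth[OF xs] i by simp
  moreover have "Suc (?n - Suc (Suc i)) = ?n - Suc i" using i by simp
  ultimately have "E (xs ! (?n - Suc i)) (xs ! (?n - Suc (Suc i)))" using sym by simp
  then show "E (rev xs ! i) (rev xs ! Suc i)" using i by (simp add: rev_nth)
qed

definition gdist :: "'a set \<Rightarrow> ('a \<Rightarrow> 'a \<Rightarrow> bool) \<Rightarrow> 'a \<Rightarrow> 'a \<Rightarrow> nat" where
  "gdist V E rt v = (LEAST n. v \<in> ball_graph V E rt n)"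

context
  fixes V :: "'a set" and E :: "'a \<Rightarrow> 'a \<Rightarrow> bool" and rt :: 'a
  assumes T: "tree V E" and rt: "rt \<in> V"
begin

abbreviation "bl \<equiv> ball_graph V E rt"
abbreviation "dd \<equiv> gdist V E rt"

lemma sg: "simple_graph V E" using T unfolding tree_def by blast
lemma symE: "E u v \<Longrightarrow> E v u" using sg unfolding simple_graph_def by blast
lemma irrE: "\<not> E u u" using sg unfolding simple_graph_def by blast
lemma EV: "E u v \<Longrightarrow> u \<in> V \<and> v \<in> V" using sg unfolding simple_graph_def by blast

lemma bl_mono: "k \<le> k' \<Longrightarrow> bl k \<subseteq> bl k'"
  unfolding ball_graph_def by force

lemma bl_V: "bl k \<subseteq> V"
  unfolding ball_graph_def using walk_setD walk_ne last_in_set by fastforce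

lemma walk_bl: "walk V E xs \<Longrightarrow> hd xs = rt \<Longrightarrow> last xs \<in> bl (length xs - 1)"
  unfolding ball_graph_def using walk_ne by fastforce

lemma dd_le: "v \<in> bl k \<Longrightarrow> dd v \<le> k"
  unfolding gdist_def by (rule Least_le)

lemma dd_in: "v \<in> bl k \<Longrightarrow> v \<in> bl (dd v)"
  unfolding gdist_def by (rule LeastI)

lemma reach: assumes "v \<in> V" shows "v \<in> bl (dd v)"
proof -
  obtain xs where "walk V E xs" "hd xs = rt" "last xs = v"
    using T rt assms unfolding tree_def connected_graph_def by blast
  then show ?thesis using walk_bl dd_in by metis
qed

lemma bl_iff: "v \<in> V \<Longrightarrow> v \<in> bl k \<longleftrightarrow> dd v \<le> k"
  using dd_le reach bl_mono by blast

lemma dd_rt: "dd rt = 0"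
proof -
  have "walk V E [rt]" using rt unfolding walk_def by simp
  then have "rt \<in> bl 0" unfolding ball_graph_def by force
  then show ?thesis using dd_le by fastforce
qed

lemma adj_bl: assumes "E u v" "u \<in> bl k" shows "v \<in> bl (Suc k)"
proof -
  obtain xs where xs: "walk V E xs" "hd xs = rt" "last xs = u" "length xs \<le> k + 1"
    using assms(2) unfolding ball_graph_def by blast
  have "walk V E [v]" using EV[OF assms(1)] unfolding walk_def by simp
  then have "walk V E (xs @ [v])" using walk_append[OF xs(1)] xs(3) assms(1) by simp
  moreover have "hd (xs @ [v]) = rt" using xs walk_ne[OF xs(1)] by simp
  ultimately show ?thesis unfolding ball_graph_def using xs(4) by force
qed

lemma adj_dd: assumes "E u v" shows "dd v \<le> Suc (dd u)"
  using adj_bl[OF assms reach] EV[OF assms] dd_le by blast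

lemma shortest:
  assumes v: "v \<in> V"
  obtains p where "walk V E p" "hd p = rt" "last p = v" "length p = Suc (dd v)"
proof -
  obtain p where p: "walk V E p" "hd p = rt" "last p = v" "length p \<le> dd v + 1"
    using reach[OF v] unfolding ball_graph_def by blast
  have "dd v \<le> length p - 1" using walk_bl[OF p(1,2)] p(3) dd_le by simp
  then have "length p = Suc (dd v)" using p(4) walk_ne[OF p(1)] by (cases p) auto
  then show ?thesis using that p by blast
qed

lemma shortest_nth:
  assumes p: "walk V E p" "hd p = rt" "length p = Suc (dd (last p))" and i: "i < length p"
  shows "dd (p ! i) = i"
proof -
  have pi: "p ! i \<in> bl i"
  proof -
    have "walk V E (take (Suc i) p)" using walk_take[OF p(1)] by simp
    moreover have "hd (take (Suc i) p) = rt" using p(2) i by (cases p) auto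
    moreover have "last (take (Suc i) p) = p ! i" using i by (simp add: take_Suc_conv_app_nth)
    ultimately show ?thesis using walk_bl i by fastforce
  qed
  have le: "dd (p ! i) \<le> i" using dd_le[OF pi] .
  show ?thesis
  proof (rule ccontr)
    assume "dd (p ! i) \<noteq> i"
    then have lt: "dd (p ! i) < i" using le by simp
    have piV: "p ! i \<in> V" using pi bl_V by blast
    obtain s where s: "walk V E s" "hd s = rt" "last s = p ! i" "length s = Suc (dd (p ! i))"
      using shortest[OF piV] by blast
    show False
    proof (cases "Suc i < length p")
      case True
      have wd: "walk V E (drop (Suc i) p)" using walk_drop[OF p(1) True] .
      have "hd (drop (Suc i) p) = p ! Suc i" using True by (simp add: hd_drop_conv_nth)
      then have "E (last s) (hd (drop (Suc i) p))" using s(3) walk_nth[OF p(1) True] by simp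
      then have w: "walk V E (s @ drop (Suc i) p)" using walk_append[OF s(1) wd] by simp
      have "hd (s @ drop (Suc i) p) = rt" using s walk_ne[OF s(1)] by simp
      moreover have "last (s @ drop (Suc i) p) = last p" using True by simp
      ultimately have "last p \<in> bl (length (s @ drop (Suc i) p) - 1)" using walk_bl[OF w] by simp
      then have "dd (last p) \<le> length (s @ drop (Suc i) p) - 1" by (rule dd_le)
      then show False using s(4) lt p(3) True by simp
    next
      case False
      then have "i = length p - 1" using i by simp
      then have "p ! i = last p" using i walk_ne[OF p(1)] by (simp add: last_conv_nth)
      then show False using lt p(3) i by simp
    qed
  qed
qed

lemma adj_neq: assumes e: "E u v" shows "dd u \<noteq> dd v"
proof
  assume eq: "dd u = dd v"
  define m where "m = dd u"
  have uV: "u \<in> V" and vV: "v \<in> V" using EV[OF e] by auto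
  have uv: "u \<noteq> v" using e irrE by auto
  obtain p where p: "walk V E p" "hd p = rt" "last p = u" "length p = Suc m"
    using shortest[OF uV] m_def by blast
  obtain q where q: "walk V E q" "hd q = rt" "last q = v" "length q = Suc m"
    using shortest[OF vV] m_def eq by metis
  have dp: "dd (p ! i) = i" if "i < Suc m" for i
    using shortest_nth[OF p(1,2)] p that m_def by simp
  have dq: "dd (q ! i) = i" if "i < Suc m" for i
    using shortest_nth[OF q(1,2)] q that m_def eq by simp
  define K where "K = {i. i \<le> m \<and> p ! i = q ! i}"
  have p0: "p ! 0 = rt" using p walk_ne[OF p(1)] by (simp add: hd_conv_nth)
  have q0: "q ! 0 = rt" using q walk_ne[OF q(1)] by (simp add: hd_conv_nth)
  have K0: "0 \<in> K" unfolding K_def using p0 q0 by simp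
  have fK: "finite K" unfolding K_def by simp
  define k where "k = Max K"
  have kK: "k \<in> K" unfolding k_def using Max_in[OF fK] K0 by blast
  have kmax: "\<And>i. i \<in> K \<Longrightarrow> i \<le> k" unfolding k_def using Max_ge[OF fK] by blast
  have pm: "p ! m = u" using p walk_ne[OF p(1)] by (metis diff_Suc_1 last_conv_nth)
  have qm: "q ! m = v" using q walk_ne[OF q(1)] by (metis diff_Suc_1 last_conv_nth)
  have km: "k < m"
  proof -
    have "k \<le> m" using kK unfolding K_def by simp
    moreover have "k \<noteq> m" using kK pm qm uv unfolding K_def by auto
    ultimately show ?thesis by simp
  qed
  have pkqk: "p ! k = q ! k" using kK unfolding K_def by simp
  define c1 where "c1 = drop k p"
  define c2 where "c2 = rev (drop (Suc k) q)"
  have w1: "walk V E c1" unfolding c1_def using walk_drop[OF p(1)] p km by simp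
  have w2: "walk V E c2" unfolding c2_def using walk_rev[OF symE walk_drop[OF q(1)]] q km by simp
  have l1: "last c1 = u" unfolding c1_def using p km by simp
  have h2: "hd c2 = v" unfolding c2_def using q km by (simp add: hd_rev)
  have wc: "walk V E (c1 @ c2)" using walk_append[OF w1 w2] l1 h2 e by simp
  have dist_p: "distinct p"
    unfolding distinct_conv_nth using dp p(4) by metis
  have dist_q: "distinct q"
    unfolding distinct_conv_nth using dq q(4) by metis
  have disj: "set c1 \<inter> set c2 = {}"
  proof (rule ccontr)
    assume "set c1 \<inter> set c2 \<noteq> {}"
    then obtain a where a1: "a \<in> set (drop k p)" and a2: "a \<in> set (drop (Suc k) q)"
      unfolding c1_def c2_def by auto
    obtain i where i: "i < length (drop k p)" "drop k p ! i = a" using a1 by (auto simp: in_set_conv_nth)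
    obtain j where j: "j < length (drop (Suc k) q)" "drop (Suc k) q ! j = a" using a2 by (auto simp: in_set_conv_nth)
    have pa: "p ! (k + i) = a" "k + i < Suc m" using i p(4) by auto
    have qa: "q ! (Suc k + j) = a" "Suc k + j < Suc m" using j q(4) by auto
    have "k + i = Suc k + j" using dp[OF pa(2)] dq[OF qa(2)] pa(1) qa(1) by simp
    then have "k + i \<in> K" unfolding K_def using pa qa by auto
    then have "k + i \<le> k" by (rule kmax)
    then show False using \<open>k + i = Suc k + j\<close> by simp
  qed
  have dc: "distinct (c1 @ c2)"
    using disj dist_p dist_q unfolding c1_def c2_def by simp
  have lc: "length (c1 @ c2) \<ge> 3" unfolding c1_def c2_def using p(4) q(4) km by simp
  have "last (c1 @ c2) = q ! Suc k"
  proof -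
    have "drop (Suc k) q \<noteq> []" using q(4) km by simp
    then have "last c2 = hd (drop (Suc k) q)" unfolding c2_def by (simp add: last_rev)
    also have "\<dots> = q ! Suc k" using q(4) km by (simp add: hd_drop_conv_nth)
    finally show ?thesis using w2 walk_ne[OF w2] by simp
  qed
  moreover have "hd (c1 @ c2) = q ! k"
    unfolding c1_def using p(4) km pkqk by (simp add: hd_drop_conv_nth)
  moreover have "E (q ! k) (q ! Suc k)" using walk_nth[OF q(1)] q(4) km by simp
  ultimately have "E (last (c1 @ c2)) (hd (c1 @ c2))" using symE by simp
  then have "has_cycle V E" unfolding has_cycle_def using wc dc lc by blast
  then show False using T unfolding tree_def by blast
qed

lemma walk_parity:
  assumes xs: "walk V E xs" "hd xs = rt"
  shows "i < length xs \<Longrightarrow> even (dd (xs ! i)) = even i"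
proof (induction i)
  case 0
  have "xs ! 0 = rt" using xs walk_ne[OF xs(1)] by (simp add: hd_conv_nth)
  then show ?case using dd_rt by simp
next
  case (Suc i)
  have e: "E (xs ! i) (xs ! Suc i)" using walk_nth[OF xs(1) Suc.prems] .
  have "dd (xs ! Suc i) \<le> Suc (dd (xs ! i))" using adj_dd[OF e] .
  moreover have "dd (xs ! i) \<le> Suc (dd (xs ! Suc i))" using adj_dd[OF symE[OF e]] .
  moreover have "dd (xs ! i) \<noteq> dd (xs ! Suc i)" using adj_neq[OF e] .
  ultimately have "dd (xs ! Suc i) = Suc (dd (xs ! i)) \<or> dd (xs ! i) = Suc (dd (xs ! Suc i))" by linarith
  then show ?case using Suc.IH Suc.prems by auto
qed

end

lemma Re_mult_ofr: "Re (a * complex_of_real r) = Re a * r" by simp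

lemma PZ_of_real: "PZ E W (of_real x :: complex) = of_real (PZ E W x)"
  unfolding PZ_def by simp

lemma PZ_hol: "PZ E W holomorphic_on S"
  unfolding PZ_def by (intro holomorphic_intros)

lemma md_R_eq:
  assumes irr: "\<And>u. \<not> E u u" and W: "finite W" and w: "w \<in> W" and x: "x > 0"
  shows "md_R W (induced E W) x w = x * SR E W w x"
proof -
  have Z: "md_Z W (induced E W) x = PZ E W x" unfolding md_Z_def PZ_def ..
  have cW: "card W = Suc (card (W - {w}))" using card_Suc_Diff1[OF W w] by simp
  have "md_R W (induced E W) x w = (\<Sum>D\<in>M E (W - {w}). x ^ (card W - 2 * card D) / PZ E W x)"
    unfolding md_R_def md_measure_def Z by (rule sum.cong[OF M_avoid[symmetric] refl])
  also have "\<dots> = (\<Sum>D\<in>M E (W - {w}). x * x ^ (card (W - {w}) - 2 * card D)) / PZ E W x"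
    unfolding sum_divide_distrib
  proof (rule sum.cong[OF refl])
    fix D assume D: "D \<in> M E (W - {w})"
    have "finite (W - {w})" using W by simp
    then have "2 * card D \<le> card (W - {w})" using card_M[OF irr _ D] by simp
    then show "x ^ (card W - 2 * card D) / PZ E W x = x * x ^ (card (W - {w}) - 2 * card D) / PZ E W x"
      using cW by (simp add: Suc_diff_le)
  qed
  also have "\<dots> = x * SR E W w x" unfolding SR_def PZ_def by (simp add: sum_distrib_left)
  finally show ?thesis .
qed

lemma G_bound:
  assumes sym: "\<And>u v. E u v \<Longrightarrow> E v u" and irr: "\<And>u. \<not> E u u"
    and W: "finite W" and w: "w \<in> W" and z: "Re z > 0"
  shows "PZ E W z \<noteq> 0" "norm (z * PZ E (W - {w}) z / PZ E W z) \<le> norm z / Re z"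
proof -
  have H: "PZ E W (z::complex) \<noteq> 0 \<and> (\<forall>w\<in>W. PZ E (W - {w}) z \<noteq> 0 \<and> Re (PZ E W z / PZ E (W - {w}) z) \<ge> Re z)"
    by (rule HL[OF sym irr W z])
  then show "PZ E W z \<noteq> 0" by blast
  define q where "q = PZ E W z / PZ E (W - {w}) z"
  have nz: "PZ E (W - {w}) z \<noteq> 0" and Rq: "Re q \<ge> Re z" using H w unfolding q_def by auto
  have nq: "norm q \<ge> Re z" using Rq complex_Re_le_cmod[of q] by linarith
  have qpos: "norm q > 0" using nq z by linarith
  have "z * PZ E (W - {w}) z / PZ E W z = z / q" unfolding q_def using nz by simp
  then have "norm (z * PZ E (W - {w}) z / PZ E W z) = norm z / norm q" by (simp add: norm_divide)
  also have "\<dots> \<le> norm z / Re z" using nq z by (simp add: frac_le)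
  finally show "norm (z * PZ E (W - {w}) z / PZ E W z) \<le> norm z / Re z" .
qed

lemma analytic_from_seq:
  fixes G :: "nat \<Rightarrow> complex \<Rightarrow> complex" and F :: "nat \<Rightarrow> real \<Rightarrow> real" and f :: "real \<Rightarrow> real"
  assumes hol: "\<And>n. G n holomorphic_on {z. Re z > 0}"
    and bnd: "\<And>n z. Re z > 0 \<Longrightarrow> norm (G n z) \<le> norm z / Re z"
    and real: "\<And>n x. x > 0 \<Longrightarrow> G n (of_real x) = of_real (F n x)"
    and conv: "\<And>x. x > 0 \<Longrightarrow> (\<lambda>n. F n x) \<longlonglongrightarrow> f x"
  shows "real_analytic_on f {0<..}"
  unfolding real_analytic_on_def
proof
  fix x0 :: real assume "x0 \<in> {0<..}"
  then have x0: "x0 > 0" by simp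
  define S where "S = ball (complex_of_real x0) (x0 / 2)"
  have ReS: "Re z > x0 / 2" if "z \<in> S" for z
  proof -
    have "\<bar>Re z - x0\<bar> \<le> norm (z - of_real x0)" using abs_Re_le_cmod[of "z - of_real x0"] by simp
    moreover have "norm (z - of_real x0) < x0 / 2" using that unfolding S_def by (simp add: dist_norm norm_minus_commute)
    ultimately show ?thesis by linarith
  qed
  have normS: "norm z \<le> 3 * x0 / 2" if "z \<in> S" for z
  proof -
    have "norm z \<le> norm (z - of_real x0) + norm (complex_of_real x0)"
      using norm_triangle_ineq[of "z - of_real x0" "of_real x0"] by simp
    moreover have "norm (z - of_real x0) < x0 / 2" using that unfolding S_def by (simp add: dist_norm norm_minus_commute)
    ultimately show ?thesis using x0 by simp
  qed
  have SH: "S \<subseteq> {z. Re z > 0}" using ReS x0 by fastforce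
  have bS: "norm (G n z) \<le> 3" if "z \<in> S" for n z
  proof -
    have "norm (G n z) \<le> norm z / Re z" using bnd ReS[OF that] x0 by simp
    also have "\<dots> \<le> (3 * x0 / 2) / (x0 / 2)"
      using normS[OF that] ReS[OF that] x0 by (intro frac_le) auto
    also have "\<dots> = 3" using x0 by simp
    finally show ?thesis .
  qed
  obtain h \<sigma> where h: "h holomorphic_on S" and sm: "strict_mono (\<sigma> :: nat \<Rightarrow> nat)"
      and lim: "\<And>z. z \<in> S \<Longrightarrow> (\<lambda>n. G (\<sigma> n) z) \<longlonglongrightarrow> h z"
  proof (rule Montel[where S=S and \<H>="range G" and \<F>=G])
    show "open S" unfolding S_def by simp
    show "\<And>h. h \<in> range G \<Longrightarrow> h holomorphic_on S" using hol SH holomorphic_on_subset by blast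
    show "\<exists>B. \<forall>h\<in>range G. \<forall>z\<in>K. norm (h z) \<le> B" if "compact K" "K \<subseteq> S" for K
      using bS that by blast
  qed auto
  have hx: "h (of_real x) = of_real (f x)" if "\<bar>x - x0\<bar> < x0 / 2" for x
  proof -
    have xS: "complex_of_real x \<in> S" unfolding S_def using that
      by (simp add: dist_norm norm_minus_commute abs_minus_commute flip: of_real_diff)
    have xpos: "x > 0" using that x0 by linarith
    have "(\<lambda>n. F n x) \<longlonglongrightarrow> f x" using conv[OF xpos] .
    then have "((\<lambda>n. F n x) \<circ> \<sigma>) \<longlonglongrightarrow> f x" using LIMSEQ_subseq_LIMSEQ sm by blast
    then have "(\<lambda>n. complex_of_real (F (\<sigma> n) x)) \<longlonglongrightarrow> of_real (f x)"
      by (intro tendsto_of_real) (simp add: o_def)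
    moreover have "(\<lambda>n. complex_of_real (F (\<sigma> n) x)) = (\<lambda>n. G (\<sigma> n) (of_real x))"
      using real xpos by simp
    ultimately show ?thesis using lim[OF xS] LIMSEQ_unique by metis
  qed
  define c where "c n = Re ((deriv ^^ n) h (of_real x0) / fact n)" for n
  show "\<exists>\<epsilon>>0. \<exists>c::nat \<Rightarrow> real. \<forall>x. \<bar>x - x0\<bar> < \<epsilon> \<longrightarrow> (\<lambda>n. c n * (x - x0) ^ n) sums f x"
  proof (intro exI[of _ "x0 / 2"] conjI exI[of _ c] allI impI)
    show "x0 / 2 > 0" using x0 by simp
    fix x assume x: "\<bar>x - x0\<bar> < x0 / 2"
    have xS: "complex_of_real x \<in> S" unfolding S_def using x
      by (simp add: dist_norm norm_minus_commute abs_minus_commute flip: of_real_diff)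
    have "(\<lambda>n. (deriv ^^ n) h (of_real x0) / fact n * (of_real x - of_real x0) ^ n) sums h (of_real x)"
      using holomorphic_power_series[OF h[unfolded S_def] xS[unfolded S_def]] .
    then have "(\<lambda>n. Re ((deriv ^^ n) h (of_real x0) / fact n * (of_real x - of_real x0) ^ n)) sums Re (h (of_real x))"
      by (rule sums_Re)
    moreover have "(\<lambda>n. Re ((deriv ^^ n) h (of_real x0) / fact n * (of_real x - of_real x0) ^ n)) = (\<lambda>n. c n * (x - x0) ^ n)"
    proof
      fix n
      have eq: "(complex_of_real x - of_real x0) ^ n = of_real ((x - x0) ^ n)" by simp
      show "Re ((deriv ^^ n) h (of_real x0) / fact n * (of_real x - of_real x0) ^ n) = c n * (x - x0) ^ n"
        unfolding c_def eq Re_mult_ofr ..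
    qed
    ultimately show "(\<lambda>n. c n * (x - x0) ^ n) sums f x" using hx[OF x] by simp
  qed
qed

lemma exit_ball:
  assumes T: "tree V E" and rt: "rt \<in> V"
  shows "exitp E (ball_graph V E rt r) (ball_graph V E rt (Suc (Suc r))) rt (even r)"
  unfolding exitp_def
proof (intro allI impI)
  fix xs assume H: "xs \<noteq> [] \<and> set xs \<subseteq> ball_graph V E rt (Suc (Suc r)) \<and>
      (\<forall>i. Suc i < length xs \<longrightarrow> E (xs ! i) (xs ! Suc i)) \<and>
      hd xs = rt \<and> last xs \<notin> ball_graph V E rt r \<and> set (butlast xs) \<subseteq> ball_graph V E rt r"
  have ne: "xs \<noteq> []" using H by blast
  have sV: "set xs \<subseteq> V" using H bl_V[OF T rt] by blast
  have wk: "walk V E xs" unfolding walk_def using H sV by blast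
  have hd: "hd xs = rt" using H by blast
  have rt0: "rt \<in> ball_graph V E rt r" using bl_iff[OF T rt rt] dd_rt[OF T rt] by simp
  define j where "j = length xs - 1"
  have j1: "j \<ge> 1"
  proof (rule ccontr)
    assume nj: "\<not> j \<ge> 1"
    have "length xs > 0" using ne by simp
    then have "length xs = 1" using nj unfolding j_def by linarith
    then have "last xs = hd xs" using ne by (cases xs) auto
    then show False using H rt0 by auto
  qed
  have lj: "Suc j = length xs" using ne unfolding j_def by (cases xs) auto
  have lastj: "last xs = xs ! j" using ne unfolding j_def by (simp add: last_conv_nth)
  have "xs ! (j - 1) \<in> set (butlast xs)"
  proof -
    have "j - 1 < length (butlast xs)" using lj j1 by simp
    then have "butlast xs ! (j - 1) \<in> set (butlast xs)" by (rule nth_mem)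
    moreover have "butlast xs ! (j - 1) = xs ! (j - 1)" using lj j1 by (simp add: nth_butlast)
    ultimately show ?thesis by simp
  qed
  then have prev: "xs ! (j - 1) \<in> ball_graph V E rt r" using H by blast
  have e: "E (xs ! (j - 1)) (xs ! j)" using walk_nth[OF wk, of "j - 1"] lj j1 by simp
  have jV: "xs ! j \<in> V" using sV lj by (metis lessI nth_mem subsetD)
  have d1: "gdist V E rt (xs ! (j - 1)) \<le> r" using dd_le[OF T rt prev] .
  have d2: "\<not> gdist V E rt (xs ! j) \<le> r" using H lastj bl_iff[OF T rt jV] by auto
  have d3: "gdist V E rt (xs ! j) \<le> Suc (gdist V E rt (xs ! (j - 1)))" using adj_dd[OF T rt e] .
  have dj: "gdist V E rt (xs ! j) = Suc r" using d1 d2 d3 by linarith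
  have "even (gdist V E rt (xs ! j)) = even j" using walk_parity[OF T rt wk hd] lj by simp
  then show "even (length xs) = even r" using dj lj[symmetric] by auto
qed

lemma G_hol:
  assumes sym: "\<And>u v. E u v \<Longrightarrow> E v u" and irr: "\<And>u. \<not> E u u"
    and W: "finite W" and w: "w \<in> W"
  shows "(\<lambda>z. z * PZ E (W - {w}) z / PZ E W z) holomorphic_on {z. Re z > 0}"
proof (rule holomorphic_on_divide)
  show "(\<lambda>z. z * PZ E (W - {w}) z) holomorphic_on {z. Re z > 0}"
    unfolding PZ_def by (intro holomorphic_intros)
  show "PZ E W holomorphic_on {z. Re z > 0}" by (rule PZ_hol)
  show "\<And>z. z \<in> {z. Re z > 0} \<Longrightarrow> PZ E W z \<noteq> 0" using G_bound(1)[where E=E, OF sym irr W w] by simp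
qed

theorem proposition3p4:
  fixes V :: "'a set" and E :: "'a \<Rightarrow> 'a \<Rightarrow> bool" and rt :: 'a
  assumes "tree V E" and "rt \<in> V" and "locally_finite_tree V E rt"
  defines "Rr \<equiv> (\<lambda>x r. md_R (ball_graph V E rt r) (induced E (ball_graph V E rt r)) x rt)"
  shows "(\<forall>x>0. convergent (\<lambda>r. Rr x (2 * r)) \<and> convergent (\<lambda>r. Rr x (2 * r + 1)))
       \<and> real_analytic_on (\<lambda>x. lim (\<lambda>r. Rr x (2 * r))) {0<..}
       \<and> real_analytic_on (\<lambda>x. lim (\<lambda>r. Rr x (2 * r + 1))) {0<..}"
proof -
  note T = assms(1) and rt = assms(2)
  have sym: "\<And>u v. E u v \<Longrightarrow> E v u" using symE[OF T rt] .
  have irr: "\<And>u. \<not> E u u" using irrE[OF T rt] .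
  let ?b = "ball_graph V E rt"
  have fin: "\<And>r. finite (?b r)" using assms(3) unfolding locally_finite_tree_def by blast
  have rtb: "\<And>r. rt \<in> ?b r" using bl_iff[OF T rt rt] dd_rt[OF T rt] by simp
  have Rr_eq: "Rr x r = x * SR E (?b r) rt x" if "x > 0" for x r
    unfolding Rr_def using md_R_eq[OF irr fin rtb that] .
  have SRpos: "SR E (?b r) rt x > 0" if "x > 0" for x r using SR_pos[OF fin that] .
  have SRle: "x * SR E (?b r) rt x \<le> 1" if x: "x > 0" for x r
  proof -
    have "1 / SR E (?b r) rt x = x + (\<Sum>v\<in>{v\<in>?b r. E rt v}. SR E (?b r - {rt}) v x)"
      by (rule SR_rec[where E=E, OF sym irr fin rtb x])
    moreover have "(\<Sum>v\<in>{v\<in>?b r. E rt v}. SR E (?b r - {rt}) v x) \<ge> 0"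
      by (rule sum_nonneg) (use SR_pos[of "?b r - {rt}" x E] fin x in \<open>auto intro: less_imp_le\<close>)
    ultimately have "x \<le> 1 / SR E (?b r) rt x" by linarith
    then show ?thesis using SRpos[OF x, of r] by (simp add: field_simps)
  qed
  have mono: "if even r then SR E (?b (Suc (Suc r))) rt x \<le> SR E (?b r) rt x
      else SR E (?b r) rt x \<le> SR E (?b (Suc (Suc r))) rt x" if x: "x > 0" for x r
  proof -
    have sub: "?b r \<subseteq> ?b (Suc (Suc r))" using bl_mono[OF T rt, of r "Suc (Suc r)"] by linarith
    show ?thesis by (rule SR_mono[where E=E, OF sym irr x fin sub rtb exit_ball[OF T rt]])
  qed
  have bnd: "Bseq (\<lambda>r. Rr x (f r))" if x: "x > 0" for x and f :: "nat \<Rightarrow> nat"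
  proof (rule BseqI'[of _ 1])
    fix n
    show "norm (Rr x (f n)) \<le> 1" using Rr_eq[OF x] SRle[OF x] SRpos[OF x] x by (simp add: abs_of_pos)
  qed
  have conv_even: "convergent (\<lambda>r. Rr x (2 * r))" if x: "x > 0" for x
  proof (rule Bseq_monoseq_convergent[OF bnd[OF x] decseq_imp_monoseq[OF decseq_SucI]])
    fix n
    have "SR E (?b (Suc (Suc (2 * n)))) rt x \<le> SR E (?b (2 * n)) rt x" using mono[OF x, of "2 * n"] by simp
    then show "Rr x (2 * Suc n) \<le> Rr x (2 * n)" using Rr_eq[OF x] x by simp
  qed
  have conv_odd: "convergent (\<lambda>r. Rr x (2 * r + 1))" if x: "x > 0" for x
  proof (rule Bseq_monoseq_convergent[OF bnd[OF x] incseq_imp_monoseq[OF incseq_SucI]])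
    fix n
    have "SR E (?b (2 * n + 1)) rt x \<le> SR E (?b (Suc (Suc (2 * n + 1)))) rt x" using mono[OF x, of "2 * n + 1"] by simp
    then show "Rr x (2 * n + 1) \<le> Rr x (2 * Suc n + 1)" using Rr_eq[OF x] x by simp
  qed
  have real: "(\<lambda>z::complex. z * PZ E (?b r - {rt}) z / PZ E (?b r) z) (of_real x) = of_real (Rr x r)"
    if x: "x > 0" for x r
  proof -
    have "of_real (Rr x r) = (of_real (x * (PZ E (?b r - {rt}) x / PZ E (?b r) x)) :: complex)"
      using Rr_eq[OF x] by (simp add: SR_def)
    also have "\<dots> = of_real x * (of_real (PZ E (?b r - {rt}) x) / of_real (PZ E (?b r) x))"
      by (simp only: of_real_mult of_real_divide)
    also have "\<dots> = of_real x * (PZ E (?b r - {rt}) (of_real x) / PZ E (?b r) (of_real x))"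
      by (simp only: PZ_of_real)
    finally show ?thesis by simp
  qed
  have an: "real_analytic_on (\<lambda>x. lim (\<lambda>n. Rr x (g n))) {0<..}" if g: "\<And>x. x > 0 \<Longrightarrow> convergent (\<lambda>n. Rr x (g n))"
    for g :: "nat \<Rightarrow> nat"
  proof (rule analytic_from_seq[where G="\<lambda>n z. z * PZ E (?b (g n) - {rt}) z / PZ E (?b (g n)) z"
        and F="\<lambda>n x. Rr x (g n)"])
    show "\<And>n. (\<lambda>z. z * PZ E (?b (g n) - {rt}) z / PZ E (?b (g n)) z) holomorphic_on {z. Re z > 0}"
      by (rule G_hol[where E=E, OF sym irr fin rtb])
    show "\<And>n z. Re z > 0 \<Longrightarrow> norm (z * PZ E (?b (g n) - {rt}) z / PZ E (?b (g n)) z) \<le> norm z / Re z"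
      by (rule G_bound(2)[where E=E, OF sym irr fin rtb])
    show "\<And>n x. x > 0 \<Longrightarrow> (\<lambda>z::complex. z * PZ E (?b (g n) - {rt}) z / PZ E (?b (g n)) z) (of_real x) = of_real (Rr x (g n))"
      using real by simp
    show "\<And>x. x > 0 \<Longrightarrow> (\<lambda>n. Rr x (g n)) \<longlonglongrightarrow> lim (\<lambda>n. Rr x (g n))"
      using g by (simp add: convergent_LIMSEQ_iff)
  qed
  show ?thesis
    using conv_even conv_odd an[of "\<lambda>r. 2 * r"] an[of "\<lambda>r. 2 * r + 1"] by blast
qed

end
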